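(* Let $F$ be a Ferrers diagram with at least two rows, let $k$ be the length of the first row of $F$ and $\ell$ the length of the second row. Then the divisor $D_{k+1,1}$ on $R(F)$ has positive rank if and only if $(\ell,k-\ell+1)\in F$.
   Context: $\mathbb{N}=\{1,2,3,\dots\}$. A Ferrers diagram is a finite subset $F\subset\mathbb{N}^2$ such that whenever $(x,y)\in F$, either $x=1$ or $(x-1,y)\in F$, and either $y=1$ or $(x,y-1)\in F$; $x$ is the column index and $y$ the row index (row $y$ is $\{(x',y)\in F\}$, and its length is its cardinality). The Ferrers rook graph $R(F)$ is the simple graph with vertex set $F$ in which distinct $(x,y),(x',y')$ are adjacent iff $x=x'$ or $y=y'$. For $(x,y)\in\mathbb{N}^2$, $D_{x,y}=\sum_{(x',y')\in F,\ x'\neq x,\ y'\neq y}(x',y')$. Divisors on a graph: functions $D:V\to\mathbb{Z}$; firing a vertex $v$ means $v$ loses $\deg(v)$ chips and each neighbor gains one; divisors are equivalent if related by a sequence of firings; $\vert D\vert$ is the set of effective (nonnegative) divisors equivalent to $D$; $D$ has positive rank if for every vertex $v$ some $D'\in\vert D\vert$ has $D'(v)>0$. *)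

theory Defs
  imports Main
begin

type_synonym cell = "nat \<times> nat"

text \<open>Ferrers diagram: finite set of cells with positive coordinates (column x, row y),
closed downwards in both coordinates.\<close>
definition ferrers :: "cell set \<Rightarrow> bool" where
  "ferrers F \<longleftrightarrow> finite F \<and>
     (\<forall>(x,y)\<in>F. x \<ge> 1 \<and> y \<ge> 1 \<and>
        (x = 1 \<or> (x - 1, y) \<in> F) \<and> (y = 1 \<or> (x, y - 1) \<in> F))"

definition row :: "cell set \<Rightarrow> nat \<Rightarrow> cell set" where
  "row F y = {p \<in> F. snd p = y}"

definition row_length :: "cell set \<Rightarrow> nat \<Rightarrow> nat" where
  "row_length F y = card (row F y)"

definition rook_adj :: "cell set \<Rightarrow> cell \<Rightarrow> cell \<Rightarrow> bool" where
  "rook_adj F v w \<longleftrightarrow> v \<in> F \<and> w \<in> F \<and> v \<noteq> w \<and> (fst v = fst w \<or> snd v = snd w)"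

definition rook_deg :: "cell set \<Rightarrow> cell \<Rightarrow> nat" where
  "rook_deg F v = card {w. rook_adj F v w}"

text \<open>Divisors are integer functions on cells (only values on F matter).\<close>
type_synonym divisor = "cell \<Rightarrow> int"

definition fire :: "cell set \<Rightarrow> cell \<Rightarrow> divisor \<Rightarrow> divisor" where
  "fire F v D = (\<lambda>w. if w = v then D w - int (rook_deg F v)
                     else if rook_adj F v w then D w + 1 else D w)"

definition fire_step :: "cell set \<Rightarrow> divisor \<Rightarrow> divisor \<Rightarrow> bool" where
  "fire_step F D D' \<longleftrightarrow> (\<exists>v\<in>F. D' = fire F v D)"

definition div_equiv :: "cell set \<Rightarrow> divisor \<Rightarrow> divisor \<Rightarrow> bool" where
  "div_equiv F D D' \<longleftrightarrow> (fire_step F)\<^sup>*\<^sup>* D D'"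

definition effective :: "cell set \<Rightarrow> divisor \<Rightarrow> bool" where
  "effective F D \<longleftrightarrow> (\<forall>v\<in>F. D v \<ge> 0)"

definition linsys :: "cell set \<Rightarrow> divisor \<Rightarrow> divisor set" where
  "linsys F D = {D'. div_equiv F D D' \<and> effective F D'}"

definition positive_rank :: "cell set \<Rightarrow> divisor \<Rightarrow> bool" where
  "positive_rank F D \<longleftrightarrow> (\<forall>v\<in>F. \<exists>D'\<in>linsys F D. D' v > 0)"

definition Dxy :: "cell set \<Rightarrow> nat \<Rightarrow> nat \<Rightarrow> divisor" where
  "Dxy F x y = (\<lambda>p. if p \<in> F \<and> fst p \<noteq> x \<and> snd p \<noteq> y then 1 else 0)"

end

theory Submission
  imports Defs
begin

definition nbr :: "cell set \<Rightarrow> cell \<Rightarrow> cell set" where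
  "nbr F w = {u. rook_adj F w u}"

definition lap :: "cell set \<Rightarrow> (cell \<Rightarrow> int) \<Rightarrow> cell \<Rightarrow> int" where
  "lap F f w = (\<Sum>u\<in>nbr F w. f w - f u)"

lemma nbr_iff: "u \<in> nbr F w \<longleftrightarrow> u\<in>F \<and> w\<in>F \<and> w \<noteq> u \<and> (fst w = fst u \<or> snd w = snd u)"
  by (auto simp: nbr_def rook_adj_def)

lemma finite_nbr: "finite F \<Longrightarrow> finite (nbr F w)"
  by (rule finite_subset[of _ F]) (auto simp: nbr_iff)

lemma lap_out: "w \<notin> F \<Longrightarrow> lap F f w = 0"
  unfolding lap_def by (rule sum.neutral) (auto simp: nbr_iff)

lemma lap_add: "lap F (\<lambda>w. f w + g w) w = lap F f w + lap F g w"
  unfolding lap_def by (simp add: sum.distrib[symmetric] algebra_simps)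

lemma lap_zero: "lap F (\<lambda>w. 0) w = 0"
  unfolding lap_def by simp

lemma fire_lap:
  assumes fin: "finite F" and v: "v \<in> F"
  shows "fire F v (\<lambda>w. D w - lap F f w) = (\<lambda>w. D w - lap F (f(v := f v + 1)) w)"
proof
  fix w
  show "fire F v (\<lambda>w. D w - lap F f w) w = D w - lap F (f(v := f v + 1)) w"
  proof (cases "w = v")
    case True
    have "lap F (f(v := f v + 1)) v = (\<Sum>u\<in>nbr F v. (f v - f u) + 1)"
      unfolding lap_def by (rule sum.cong) (auto simp: nbr_iff)
    also have "\<dots> = lap F f v + int (card (nbr F v))"
      by (simp add: sum.distrib lap_def)
    finally show ?thesis using True
      by (simp add: fire_def rook_deg_def nbr_def[symmetric])
  next
    case False
    have "lap F (f(v := f v + 1)) w = (\<Sum>u\<in>nbr F w. (f w - f u) - (if u = v then 1 else 0))"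
      unfolding lap_def by (rule sum.cong) (use False in auto)
    also have "\<dots> = lap F f w - (if v \<in> nbr F w then 1 else 0)"
      by (simp add: sum_subtractf lap_def finite_nbr[OF fin])
    finally have e: "lap F (f(v := f v + 1)) w = lap F f w - (if v \<in> nbr F w then 1 else 0)" .
    have "v \<in> nbr F w \<longleftrightarrow> rook_adj F v w" by (auto simp: nbr_iff rook_adj_def)
    then show ?thesis using False e by (auto simp: fire_def)
  qed
qed

lemma equiv_lap:
  assumes "div_equiv F D D'" "finite F"
  shows "\<exists>f. D' = (\<lambda>w. D w - lap F f w)"
  using assms(1) unfolding div_equiv_def
proof (induction rule: rtranclp_induct)
  case base
  show ?case by (rule exI[of _ "\<lambda>w. 0"]) (simp add: lap_zero)
next
  case (step y z)
  then obtain f where f: "y = (\<lambda>w. D w - lap F f w)" by blast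
  from step(2) obtain v where v: "v \<in> F" "z = fire F v y" by (auto simp: fire_step_def)
  show ?case using fire_lap[OF assms(2) v(1), of D f] f v by blast
qed

lemma lap_equiv_aux:
  assumes fin: "finite F"
  shows "\<forall>f. (\<forall>w. f w \<ge> 0) \<longrightarrow> (\<forall>w. w \<notin> F \<longrightarrow> f w = 0) \<longrightarrow> (\<Sum>w\<in>F. nat (f w)) = n
     \<longrightarrow> div_equiv F D (\<lambda>w. D w - lap F f w)"
proof (induction n)
  case 0
  show ?case
  proof (intro allI impI)
    fix f :: "cell \<Rightarrow> int"
    assume a: "\<forall>w. f w \<ge> 0" "\<forall>w. w \<notin> F \<longrightarrow> f w = 0" "(\<Sum>w\<in>F. nat (f w)) = 0"
    have "\<forall>w\<in>F. nat (f w) = 0" using a(3) fin by simp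
    then have "\<forall>w\<in>F. f w = 0" using a(1) by (metis nat_0_iff order_antisym)
    then have "f = (\<lambda>w. 0)" using a(2) by (intro ext) blast
    then show "div_equiv F D (\<lambda>w. D w - lap F f w)" by (simp add: lap_zero div_equiv_def)
  qed
next
  case (Suc n)
  show ?case
  proof (intro allI impI)
    fix f :: "cell \<Rightarrow> int"
    assume a: "\<forall>w. f w \<ge> 0" "\<forall>w. w \<notin> F \<longrightarrow> f w = 0" "(\<Sum>w\<in>F. nat (f w)) = Suc n"
    obtain v where v: "v \<in> F" "f v > 0"
    proof -
      have "\<not> (\<forall>w\<in>F. nat (f w) = 0)" using a(3) by (metis sum.neutral nat.distinct(1))
      then show ?thesis using that by force
    qed
    define g where "g = f(v := f v - 1)"
    have g1: "\<forall>w. g w \<ge> 0" using a(1) v by (auto simp: g_def)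
    have g2: "\<forall>w. w \<notin> F \<longrightarrow> g w = 0" using a(2) v by (auto simp: g_def)
    have "(\<Sum>w\<in>F. nat (f w)) = nat (f v) + (\<Sum>w\<in>F-{v}. nat (f w))"
      using fin v by (simp add: sum.remove)
    moreover have "(\<Sum>w\<in>F. nat (g w)) = nat (g v) + (\<Sum>w\<in>F-{v}. nat (g w))"
      using fin v by (simp add: sum.remove)
    moreover have "(\<Sum>w\<in>F-{v}. nat (g w)) = (\<Sum>w\<in>F-{v}. nat (f w))"
      by (rule sum.cong) (auto simp: g_def)
    ultimately have "(\<Sum>w\<in>F. nat (g w)) = n" using a(3) v by (simp add: g_def)
    with Suc g1 g2 have IH: "div_equiv F D (\<lambda>w. D w - lap F g w)" by blast
    have "g(v := g v + 1) = f" by (auto simp: g_def)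
    then have "fire F v (\<lambda>w. D w - lap F g w) = (\<lambda>w. D w - lap F f w)"
      using fire_lap[OF fin v(1), of D g] by simp
    then have "fire_step F (\<lambda>w. D w - lap F g w) (\<lambda>w. D w - lap F f w)"
      using v(1) unfolding fire_step_def by metis
    then show "div_equiv F D (\<lambda>w. D w - lap F f w)"
      using IH unfolding div_equiv_def by (rule rtranclp.rtrancl_into_rtrancl[rotated])
  qed
qed

lemma lap_equiv:
  assumes "finite F" "\<forall>w. f w \<ge> 0" "\<forall>w. w \<notin> F \<longrightarrow> f w = 0"
  shows "div_equiv F D (\<lambda>w. D w - lap F f w)"
  using lap_equiv_aux[OF assms(1)] assms(2,3) by blast

lemma sum_ind: "finite A \<Longrightarrow> (\<Sum>w\<in>A. if P w then 1 else 0 :: int) = int (card {w\<in>A. P w})"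
  by (simp add: sum.inter_filter[symmetric])

lemma burn:
  assumes fin: "finite F" and v: "v \<in> F"
    and D': "\<forall>w\<in>F. D' w = D0 w - lap F h w"
    and eff: "\<forall>w\<in>F. w \<noteq> v \<longrightarrow> D' w \<ge> 0"
    and B: "\<forall>S. S \<subseteq> F - {v} \<longrightarrow> S \<noteq> {} \<longrightarrow> (\<exists>u\<in>S. D0 u < int (card {w\<in>nbr F u. w \<notin> S}))"
  shows "D' v \<le> D0 v"
proof -
  define M where "M = Max (h ` F)"
  define S where "S = {w\<in>F. h w = M}"
  have hM: "\<forall>w\<in>F. h w \<le> M" using fin by (auto simp: M_def)
  show ?thesis
  proof (cases "v \<in> S")
    case True
    have "lap F h v \<ge> 0" unfolding lap_def
      using True hM by (intro sum_nonneg) (auto simp: S_def nbr_iff)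
    then show ?thesis using D' v by auto
  next
    case False
    have "M \<in> h ` F" unfolding M_def using fin v by (intro Max_in) auto
    then have "S \<noteq> {}" by (auto simp: S_def)
    moreover have "S \<subseteq> F - {v}" using False by (auto simp: S_def)
    ultimately obtain u where u: "u \<in> S" "D0 u < int (card {w\<in>nbr F u. w \<notin> S})"
      using B by blast
    have "int (card {w\<in>nbr F u. w \<notin> S}) = (\<Sum>w\<in>nbr F u. if w \<notin> S then 1 else 0)"
      using finite_nbr[OF fin] by (simp add: sum_ind)
    also have "\<dots> \<le> lap F h u" unfolding lap_def
    proof (rule sum_mono)
      fix w assume w: "w \<in> nbr F u"
      then have "w \<in> F" by (auto simp: nbr_iff)
      then show "(if w \<notin> S then 1 else 0) \<le> h u - h w"
        using u(1) hM by (auto simp: S_def)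
    qed
    finally have "D' u < 0" using u D' by (auto simp: S_def)
    moreover have "u \<in> F" "u \<noteq> v" using u(1) False by (auto simp: S_def)
    ultimately show ?thesis using eff by auto
  qed
qed

lemma ferD:
  assumes "ferrers F" "(x,y)\<in>F"
  shows "x\<ge>1 \<and> y\<ge>1 \<and> (x=1 \<or> (x-1,y)\<in>F) \<and> (y=1 \<or> (x,y-1)\<in>F)"
proof -
  have h: "\<forall>(x,y)\<in>F. x \<ge> 1 \<and> y \<ge> 1 \<and> (x = 1 \<or> (x - 1, y) \<in> F) \<and> (y = 1 \<or> (x, y - 1) \<in> F)"
    using assms(1) unfolding ferrers_def by (rule conjunct2)
  show ?thesis using bspec[OF h assms(2)] by simp
qed

lemma fer_col_aux: "ferrers F \<Longrightarrow> (x, y'+d) \<in> F \<Longrightarrow> 1 \<le> y' \<Longrightarrow> (x,y')\<in>F"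
proof (induction d)
  case (Suc d)
  have "y' + Suc d = 1 \<or> (x, y' + Suc d - 1) \<in> F" using ferD[OF Suc.prems(1,2)] by blast
  then have "(x, y' + d) \<in> F" using Suc.prems(3) by simp
  then show ?case using Suc.IH Suc.prems(1,3) by blast
qed simp

lemma fer_col: "ferrers F \<Longrightarrow> (x, y) \<in> F \<Longrightarrow> 1 \<le> y' \<Longrightarrow> y' \<le> y \<Longrightarrow> (x,y')\<in>F"
  using fer_col_aux[of F x y' "y - y'"] by simp

lemma fer_row_aux: "ferrers F \<Longrightarrow> (x'+d, y) \<in> F \<Longrightarrow> 1 \<le> x' \<Longrightarrow> (x',y)\<in>F"
proof (induction d)
  case (Suc d)
  have "x' + Suc d = 1 \<or> (x' + Suc d - 1, y) \<in> F" using ferD[OF Suc.prems(1,2)] by blast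
  then have "(x' + d, y) \<in> F" using Suc.prems(3) by simp
  then show ?case using Suc.IH Suc.prems(1,3) by blast
qed simp

lemma fer_row: "ferrers F \<Longrightarrow> (x, y) \<in> F \<Longrightarrow> 1 \<le> x' \<Longrightarrow> x' \<le> x \<Longrightarrow> (x',y)\<in>F"
  using fer_row_aux[of F x' "x - x'"] by simp

lemma row_char:
  assumes fer: "ferrers F"
  shows "(x,y)\<in>F \<longleftrightarrow> 1 \<le> x \<and> x \<le> row_length F y"
proof -
  define A where "A = {x. (x,y)\<in>F}"
  have fin: "finite F" using fer by (simp add: ferrers_def)
  have rA: "row F y = (\<lambda>x. (x,y)) ` A" by (auto simp: row_def A_def)
  have finA: "finite A"
  proof -
    have "A \<subseteq> fst ` F" by (force simp: A_def)
    then show ?thesis using fin finite_subset by blast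
  qed
  have cA: "row_length F y = card A" unfolding row_length_def rA
    by (rule card_image) (auto simp: inj_on_def)
  show ?thesis
  proof (cases "A = {}")
    case True
    then show ?thesis using cA by (auto simp: A_def)
  next
    case False
    define n where "n = Max A"
    have nA: "n \<in> A" using False finA by (simp add: n_def)
    have "A = {1..n}"
    proof
      show "A \<subseteq> {1..n}"
      proof
        fix x assume x: "x \<in> A"
        then have "(x,y) \<in> F" by (simp add: A_def)
        then have "1 \<le> x" using ferD[OF fer] by blast
        moreover have "x \<le> n" using x finA by (simp add: n_def)
        ultimately show "x \<in> {1..n}" by simp
      qed
      show "{1..n} \<subseteq> A"
      proof
        fix x assume x: "x \<in> {1..n}"
        have "(n,y) \<in> F" using nA by (simp add: A_def)
        then have "(x,y) \<in> F" using fer_row[OF fer _, of n y x] x by simp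
        then show "x \<in> A" by (simp add: A_def)
      qed
    qed
    then have "card A = n" by simp
    moreover have "(x,y)\<in>F \<longleftrightarrow> x \<in> A" by (simp add: A_def)
    ultimately show ?thesis using cA \<open>A = {1..n}\<close> by simp
  qed
qed


locale fsetup =
  fixes F :: "cell set" and k l :: nat
  assumes fer: "ferrers F" and r2: "row F 2 \<noteq> {}"
    and kdef: "k = row_length F 1" and ldef: "l = row_length F 2"
begin

lemma fin: "finite F" using fer by (simp add: ferrers_def)

lemma rc1: "(x,1)\<in>F \<longleftrightarrow> 1 \<le> x \<and> x \<le> k"
  using row_char[OF fer, of x 1] kdef by simp

lemma rc2: "(x,2)\<in>F \<longleftrightarrow> 1 \<le> x \<and> x \<le> l"
  using row_char[OF fer, of x 2] ldef by simp

lemma l_pos: "1 \<le> l"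
proof -
  obtain p where "p \<in> row F 2" using r2 by blast
  then have "p \<in> F" "snd p = 2" by (simp_all add: row_def)
  then have "(fst p, 2) \<in> F" by (cases p) simp
  then show ?thesis using rc2[of "fst p"] by linarith
qed

lemma l_le_k: "l \<le> k"
proof -
  have "(l,2)\<in>F" using rc2 l_pos by simp
  then have "(l,1)\<in>F" using fer_col[OF fer _, of l 2 1] by simp
  then show ?thesis using rc1 by simp
qed

lemma posF: "(x,y)\<in>F \<Longrightarrow> 1 \<le> x \<and> 1 \<le> y"
  using ferD[OF fer, of x y] by blast

lemma le_k: "(x,y)\<in>F \<Longrightarrow> x \<le> k"
proof -
  assume a: "(x,y)\<in>F"
  then have "(x,1)\<in>F" using fer_col[OF fer a, of 1] posF[OF a] by simp
  then show ?thesis using rc1 by simp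
qed

lemma le_l: "(x,y)\<in>F \<Longrightarrow> y \<noteq> 1 \<Longrightarrow> x \<le> l"
proof -
  assume a: "(x,y)\<in>F" "y \<noteq> 1"
  then have "(x,2)\<in>F" using fer_col[OF fer a(1), of 2] posF[OF a(1)] by simp
  then show ?thesis using rc2 by simp
qed

lemma Dval: "w \<in> F \<Longrightarrow> Dxy F (k+1) 1 w = (if snd w = 1 then 0 else 1)"
  using le_k[of "fst w" "snd w"] by (auto simp: Dxy_def)

lemma Dnonneg: "Dxy F (k+1) 1 w \<ge> 0"
  by (simp add: Dxy_def)


lemma hiF: "u \<in> F \<Longrightarrow> snd u \<noteq> 1 \<Longrightarrow> fst u \<le> l"
  using le_l[of "fst u" "snd u"] by simp

lemma kF: "u \<in> F \<Longrightarrow> fst u \<le> k"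
  using le_k[of "fst u" "snd u"] by simp

lemma botF: "u \<in> F \<Longrightarrow> (fst u, 1) \<in> F"
  using fer_col[OF fer _, of "fst u" "snd u" 1] posF[of "fst u" "snd u"] by simp

lemma nbrF: "u \<in> nbr F w \<Longrightarrow> u \<in> F \<and> w \<in> F \<and> w \<noteq> u \<and> (fst w = fst u \<or> snd w = snd u)"
  by (simp add: nbr_iff)

definition f1 :: "cell \<Rightarrow> int" where
  "f1 w = (if w \<in> F \<and> snd w \<noteq> 1 then 1 else 0)"

lemma lap_f1_up:
  assumes w: "w \<in> F" "snd w \<noteq> 1"
  shows "lap F f1 w \<le> 1"
proof -
  have "lap F f1 w \<le> (\<Sum>u\<in>nbr F w. if u = (fst w, 1) then 1 else 0)"
    unfolding lap_def
  proof (rule sum_mono)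
    fix u assume u: "u \<in> nbr F w"
    then have uF: "u \<in> F" and adj: "w \<noteq> u" "fst w = fst u \<or> snd w = snd u"
      using nbrF by blast+
    show "f1 w - f1 u \<le> (if u = (fst w, 1) then 1 else 0)"
    proof (cases "snd u = 1")
      case True
      then have "fst u = fst w" using adj w(2) by auto
      then have "u = (fst w, 1)" using True by (simp add: prod_eq_iff)
      then show ?thesis using True uF w by (simp add: f1_def)
    next
      case False
      then show ?thesis using uF w by (simp add: f1_def)
    qed
  qed
  also have "\<dots> \<le> 1" using finite_nbr[OF fin] by (simp add: sum.delta')
  finally show ?thesis .
qed

lemma f1_nonneg: "f1 u \<ge> 0" by (simp add: f1_def)

lemma lap_f1_low:
  assumes w: "w \<in> F" "snd w = 1"
  shows "lap F f1 w \<le> 0"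
  unfolding lap_def using w f1_nonneg by (intro sum_nonpos) (simp add: f1_def)

lemma lap_f1_v:
  assumes x: "1 \<le> x" "x \<le> l"
  shows "lap F f1 (x,1) \<le> -1"
proof -
  have x2: "(x,2) \<in> F" using rc2 x by simp
  have x1: "(x,1) \<in> F" using rc1 x l_le_k by simp
  have inn: "(x,2) \<in> nbr F (x,1)" using x1 x2 by (simp add: nbr_iff)
  have "lap F f1 (x,1) = (f1 (x,1) - f1 (x,2)) + (\<Sum>u\<in>nbr F (x,1) - {(x,2)}. f1 (x,1) - f1 u)"
    unfolding lap_def using finite_nbr[OF fin] inn by (simp add: sum.remove)
  also have "(\<Sum>u\<in>nbr F (x,1) - {(x,2)}. f1 (x,1) - f1 u) \<le> 0"
    using f1_nonneg by (intro sum_nonpos) (simp add: f1_def)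
  moreover have "f1 (x,1) - f1 (x,2) = -1" using x2 by (simp add: f1_def)
  ultimately show ?thesis by linarith
qed

definition f2 :: "cell \<Rightarrow> int" where
  "f2 w = (if w \<in> F then (if snd w \<noteq> 1 then 1 else 0) + (if fst w \<le> l then 1 else 0) else 0)"

lemma f2_val: "u \<in> F \<Longrightarrow> f2 u = (if snd u \<noteq> 1 then 2 else if fst u \<le> l then 1 else 0)"
  using hiF[of u] by (simp add: f2_def)

lemma f2_nonneg: "f2 u \<ge> 0" by (simp add: f2_def)

lemma lap_f2_a:
  assumes w: "w \<in> F" "snd w \<noteq> 1"
  shows "lap F f2 w \<le> 1"
proof -
  have wl: "fst w \<le> l" using hiF w by blast
  have "lap F f2 w \<le> (\<Sum>u\<in>nbr F w. if u = (fst w, 1) then 1 else 0)"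
    unfolding lap_def
  proof (rule sum_mono)
    fix u assume u: "u \<in> nbr F w"
    then have uF: "u \<in> F" and adj: "w \<noteq> u" "fst w = fst u \<or> snd w = snd u"
      using nbrF by blast+
    show "f2 w - f2 u \<le> (if u = (fst w, 1) then 1 else 0)"
    proof (cases "snd u = 1")
      case True
      then have "fst u = fst w" using adj w(2) by auto
      then have "u = (fst w, 1)" using True by (simp add: prod_eq_iff)
      then show ?thesis using True uF w wl f2_val[of u] f2_val[of w] by simp
    next
      case False
      then show ?thesis using uF w f2_val[of u] f2_val[of w] by simp
    qed
  qed
  also have "\<dots> \<le> 1" using finite_nbr[OF fin] by (simp add: sum.delta')
  finally show ?thesis .
qed

lemma lap_f2_b:
  assumes w: "w \<in> F" "snd w = 1" "l < fst w"
  shows "lap F f2 w \<le> 0"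
  unfolding lap_def using w f2_nonneg f2_val[of w] by (intro sum_nonpos) simp

lemma lap_f2_c:
  assumes c: "(l, k - l + 1) \<in> F" and w: "w \<in> F" "snd w = 1" "fst w \<le> l"
  shows "lap F f2 w \<le> 0"
proof -
  define A1 where "A1 = {u\<in>nbr F w. l < fst u}"
  define A2 where "A2 = {u\<in>nbr F w. snd u \<noteq> 1}"
  have "lap F f2 w = (\<Sum>u\<in>nbr F w. (if l < fst u then 1 else 0) - (if snd u \<noteq> 1 then 1 else 0))"
    unfolding lap_def
  proof (rule sum.cong)
    fix u assume u: "u \<in> nbr F w"
    then have uF: "u \<in> F" using nbrF by blast
    show "f2 w - f2 u = (if l < fst u then 1 else 0) - (if snd u \<noteq> 1 then 1 else 0)"
    proof (cases "snd u = 1")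
      case True then show ?thesis using f2_val[OF uF] f2_val[OF w(1)] w by simp
    next
      case False
      then have "fst u \<le> l" using hiF[OF uF] by simp
      then show ?thesis using False f2_val[OF uF] f2_val[OF w(1)] w by simp
    qed
  qed simp
  also have "\<dots> = int (card A1) - int (card A2)"
    using finite_nbr[OF fin] by (simp add: sum_subtractf sum_ind A1_def A2_def)
  finally have e: "lap F f2 w = int (card A1) - int (card A2)" .
  have "A1 \<subseteq> (\<lambda>x. (x,1::nat)) ` {l<..k}"
  proof
    fix u assume u: "u \<in> A1"
    then have uF: "u \<in> F" and ul: "l < fst u" by (auto simp: A1_def nbr_iff)
    then have "snd u = 1" using hiF[OF uF] by linarith
    moreover have "fst u \<le> k" using kF[OF uF] .
    ultimately show "u \<in> (\<lambda>x. (x,1::nat)) ` {l<..k}" using ul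
      by (intro image_eqI[of _ _ "fst u"]) (simp_all add: prod_eq_iff)
  qed
  then have "card A1 \<le> card ((\<lambda>x. (x,1::nat)) ` {l<..k})" by (rule card_mono[rotated]) simp
  also have "\<dots> \<le> card {l<..k}" by (rule card_image_le) simp
  finally have c1: "card A1 \<le> k - l" by simp
  have wF1: "1 \<le> fst w" using posF[of "fst w" "snd w"] w(1) by simp
  have top: "(fst w, k - l + 1) \<in> F" using fer_row[OF fer c, of "fst w"] wF1 w(3) by simp
  have sub: "(\<lambda>y. (fst w, y)) ` {2..k-l+1} \<subseteq> A2"
  proof
    fix u assume "u \<in> (\<lambda>y. (fst w, y)) ` {2..k-l+1}"
    then obtain y where y: "2 \<le> y" "y \<le> k - l + 1" "u = (fst w, y)" by auto
    have "(fst w, y) \<in> F" using fer_col[OF fer top, of y] y by simp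
    then have uF: "u \<in> F" using y(3) by simp
    have su: "snd u \<noteq> 1" "fst u = fst w" using y by auto
    then have "w \<noteq> u" using w(2) by auto
    then show "u \<in> A2" using uF su w(1) by (simp add: A2_def nbr_iff)
  qed
  have "card ((\<lambda>y. (fst w, y)) ` {2..k-l+1}) = card {2..k-l+1}"
    by (rule card_image) (simp add: inj_on_def)
  then have "k - l \<le> card A2"
    using card_mono[OF _ sub] finite_subset[of A2 F] fin
    by (auto simp: A2_def nbr_iff)
  then show ?thesis using e c1 by linarith
qed

lemma lap_f2_v:
  assumes x: "(x,1) \<in> F" "l < x"
  shows "lap F f2 (x,1) \<le> -1"
proof -
  have x11: "(1,1) \<in> F" using rc1 l_pos l_le_k by simp
  have inn: "(1,1) \<in> nbr F (x,1)" using x x11 l_pos by (simp add: nbr_iff)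
  have "lap F f2 (x,1) = (f2 (x,1) - f2 (1,1)) + (\<Sum>u\<in>nbr F (x,1) - {(1,1)}. f2 (x,1) - f2 u)"
    unfolding lap_def using finite_nbr[OF fin] inn by (simp add: sum.remove)
  also have "(\<Sum>u\<in>nbr F (x,1) - {(1,1)}. f2 (x,1) - f2 u) \<le> 0"
    using f2_nonneg f2_val[OF x(1)] x(2) by (intro sum_nonpos) simp
  moreover have "f2 (x,1) - f2 (1,1) = -1" using x x11 l_pos f2_val[OF x(1)] f2_val[OF x11] by simp
  ultimately show ?thesis by linarith
qed

lemma pos_dir:
  assumes c: "(l, k - l + 1) \<in> F"
  shows "positive_rank F (Dxy F (k+1) 1)"
  unfolding positive_rank_def
proof
  fix v assume vF: "v \<in> F"
  let ?D = "Dxy F (k+1) 1"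
  show "\<exists>D'\<in>linsys F ?D. D' v > 0"
  proof (cases "snd v = 1")
    case False
    have "?D \<in> linsys F ?D" by (simp add: linsys_def div_equiv_def effective_def Dxy_def)
    moreover have "?D v > 0" using Dval[OF vF] False by simp
    ultimately show ?thesis by blast
  next
    case True
    show ?thesis
    proof (cases "fst v \<le> l")
      case vl: True
      let ?D' = "\<lambda>w. ?D w - lap F f1 w"
      have "div_equiv F ?D ?D'" by (rule lap_equiv[OF fin]) (auto simp: f1_def)
      moreover have "effective F ?D'" unfolding effective_def
      proof
        fix w assume wF: "w \<in> F"
        show "0 \<le> ?D' w"
          using Dval[OF wF] lap_f1_up[OF wF] lap_f1_low[OF wF] by (cases "snd w = 1") simp_all
      qed
      moreover have "?D' v > 0"
        using lap_f1_v[of "fst v"] vl posF[of "fst v" "snd v"] vF True Dval[OF vF]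
        by (cases v) simp
      ultimately show ?thesis unfolding linsys_def by (intro bexI[of _ ?D']) simp_all
    next
      case vl: False
      let ?D' = "\<lambda>w. ?D w - lap F f2 w"
      have "div_equiv F ?D ?D'" by (rule lap_equiv[OF fin]) (auto simp: f2_def)
      moreover have "effective F ?D'" unfolding effective_def
      proof
        fix w assume wF: "w \<in> F"
        show "0 \<le> ?D' w"
        proof (cases "snd w = 1")
          case False then show ?thesis using Dval[OF wF] lap_f2_a[OF wF] by simp
        next
          case T: True
          show ?thesis
          proof (cases "fst w \<le> l")
            case True then show ?thesis using Dval[OF wF] lap_f2_c[OF c wF T] T by simp
          next
            case False then show ?thesis using Dval[OF wF] lap_f2_b[OF wF T] T by simp
          qed
        qed
      qed
      moreover have "?D' v > 0"
        using lap_f2_v[of "fst v"] vl vF True Dval[OF vF]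
        by (cases v) simp
      ultimately show ?thesis unfolding linsys_def by (intro bexI[of _ ?D']) simp_all
    qed
  qed
qed

definition D1 :: "cell \<Rightarrow> int" where
  "D1 w = (if snd w = 1 then int (card {u\<in>nbr F w. snd u \<noteq> 1}) else 0)"

definition rr :: "cell \<Rightarrow> int" where
  "rr w = (if snd w = 1 then 1 else 0)"

lemma D1_rr:
  assumes wF: "w \<in> F"
  shows "Dxy F (k+1) 1 w + lap F rr w = D1 w"
proof (cases "snd w = 1")
  case True
  have "lap F rr w = (\<Sum>u\<in>nbr F w. if snd u \<noteq> 1 then 1 else 0)"
    unfolding lap_def by (rule sum.cong) (simp_all add: rr_def True)
  also have "\<dots> = int (card {u\<in>nbr F w. snd u \<noteq> 1})"
    using finite_nbr[OF fin] by (simp add: sum_ind)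
  finally show ?thesis using Dval[OF wF] True by (simp add: D1_def)
next
  case False
  have "lap F rr w = (\<Sum>u\<in>nbr F w. - (if u = (fst w, 1) then 1 else 0))"
    unfolding lap_def
  proof (rule sum.cong)
    fix u assume u: "u \<in> nbr F w"
    then have adj: "fst w = fst u \<or> snd w = snd u" by (simp add: nbr_iff)
    show "rr w - rr u = - (if u = (fst w, 1) then 1 else 0)"
    proof (cases "snd u = 1")
      case True
      then have "u = (fst w, 1)" using adj False by (simp add: prod_eq_iff)
      then show ?thesis using False by (simp add: rr_def)
    next
      case F: False
      then have "u \<noteq> (fst w, 1)" by auto
      then show ?thesis using False F by (simp add: rr_def)
    qed
  qed simp
  also have "\<dots> = - (if (fst w, 1) \<in> nbr F w then 1 else 0)"
    using finite_nbr[OF fin] by (simp add: sum_negf sum.delta')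
  finally have e: "lap F rr w = - (if (fst w, 1) \<in> nbr F w then 1 else 0)" .
  have "(fst w, 1) \<in> nbr F w"
    using botF[OF wF] wF False by (auto simp: nbr_iff prod_eq_iff)
  then show ?thesis using e Dval[OF wF] False by (simp add: D1_def)
qed

lemma burn_cond:
  assumes nc: "(l, k - l + 1) \<notin> F" and lk: "l < k"
    and S: "S \<subseteq> F - {(k,1)}" "S \<noteq> {}"
  shows "\<exists>u\<in>S. D1 u < int (card {w\<in>nbr F u. w \<notin> S})"
proof (rule ccontr)
  assume "\<not> ?thesis"
  then have H: "\<And>u. u \<in> S \<Longrightarrow> int (card {w\<in>nbr F u. w \<notin> S}) \<le> D1 u" by (simp add: not_less)
  have vF: "(k,1) \<in> F" using rc1 lk l_pos by simp
  have SF: "\<And>u. u \<in> S \<Longrightarrow> u \<in> F" using S by blast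
  have a: "\<And>u w. u \<in> S \<Longrightarrow> snd u \<noteq> 1 \<Longrightarrow> w \<in> nbr F u \<Longrightarrow> w \<in> S"
  proof -
    fix u w assume u: "u \<in> S" "snd u \<noteq> 1" and w: "w \<in> nbr F u"
    have "card {w\<in>nbr F u. w \<notin> S} = 0" using H[OF u(1)] u(2) by (simp add: D1_def)
    then have "{w\<in>nbr F u. w \<notin> S} = {}" using finite_nbr[OF fin] by simp
    then show "w \<in> S" using w by blast
  qed
  have b: "\<And>u. u \<in> S \<Longrightarrow> snd u = 1 \<Longrightarrow> fst u \<le> l"
  proof -
    fix u assume u: "u \<in> S" "snd u = 1"
    have uF: "u \<in> F" using SF[OF u(1)] .
    have "u \<noteq> (k,1)" using u(1) S(1) by blast
    then have "(k,1) \<in> nbr F u" using uF vF u(2) by (auto simp: nbr_iff)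
    moreover have "(k,1) \<notin> S" using S(1) by blast
    ultimately have "{w\<in>nbr F u. w \<notin> S} \<noteq> {}" by blast
    then have "card {w\<in>nbr F u. w \<notin> S} > 0" using finite_nbr[OF fin] by (simp add: card_gt_0_iff)
    then have "card {u'\<in>nbr F u. snd u' \<noteq> 1} > 0" using H[OF u(1)] u(2) by (simp add: D1_def)
    then obtain u' where u': "u' \<in> nbr F u" "snd u' \<noteq> 1" by (auto simp: card_gt_0_iff)
    then have "fst u' = fst u" "u' \<in> F" using u(2) by (auto simp: nbr_iff)
    then show "fst u \<le> l" using hiF u'(2) by metis
  qed
  show False
  proof (cases "\<exists>u\<in>S. snd u \<noteq> 1")
    case True
    then obtain u where u: "u \<in> S" "snd u \<noteq> 1" by blast
    have uF: "u \<in> F" using SF[OF u(1)] .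
    have y1: "1 \<le> snd u" using posF[of "fst u" "snd u"] uF by simp
    have c2: "(fst u, 2) \<in> F" using fer_col[OF fer _, of "fst u" "snd u" 2] uF u(2) y1 by simp
    have c2S: "(fst u, 2) \<in> S"
    proof (cases "snd u = 2")
      case True then show ?thesis using u(1) by (metis prod.collapse)
    next
      case False
      then have "(fst u, 2) \<in> nbr F u" using c2 uF by (auto simp: nbr_iff prod_eq_iff)
      then show ?thesis using a[OF u] by blast
    qed
    have xl: "fst u \<le> l" using hiF[OF uF u(2)] .
    have l2: "(l,2) \<in> F" using rc2 l_pos by simp
    have l2S: "(l,2) \<in> S"
    proof (cases "fst u = l")
      case True then show ?thesis using c2S by simp
    next
      case False
      then have "(l,2) \<in> nbr F (fst u, 2)" using c2 l2 by (auto simp: nbr_iff)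
      then show ?thesis using a[OF c2S] by simp
    qed
    have l1: "(l,1) \<in> F" using rc1 l_pos lk by simp
    have "(l,1) \<in> nbr F (l,2)" using l1 l2 by (simp add: nbr_iff)
    then have l1S: "(l,1) \<in> S" using a[OF l2S] by simp
    have low: "(\<lambda>x. (x,1::nat)) ` {l<..k} \<subseteq> {w\<in>nbr F (l,1). w \<notin> S}"
    proof
      fix w assume "w \<in> (\<lambda>x. (x,1::nat)) ` {l<..k}"
      then obtain x where x: "l < x" "x \<le> k" "w = (x,1)" by auto
      have "(x,1) \<in> F" using rc1 x by simp
      moreover have "(x,1) \<notin> S" using b[of "(x,1)"] x by fastforce
      ultimately show "w \<in> {w\<in>nbr F (l,1). w \<notin> S}" using x l1 by (simp add: nbr_iff)
    qed
    have "card ((\<lambda>x. (x,1::nat)) ` {l<..k}) = k - l"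
      by (subst card_image) (simp_all add: inj_on_def)
    then have c1: "k - l \<le> card {w\<in>nbr F (l,1). w \<notin> S}"
      using card_mono[OF _ low] finite_nbr[OF fin] by simp
    have up: "{u'\<in>nbr F (l,1). snd u' \<noteq> 1} \<subseteq> (\<lambda>y. (l,y)) ` {2..k-l}"
    proof
      fix u' assume u': "u' \<in> {u'\<in>nbr F (l,1). snd u' \<noteq> 1}"
      then have u'F: "u' \<in> F" and fu: "fst u' = l" and su: "snd u' \<noteq> 1" by (auto simp: nbr_iff)
      have s1: "1 \<le> snd u'" using posF[of "fst u'" "snd u'"] u'F by simp
      have "snd u' \<le> k - l"
      proof (rule ccontr)
        assume "\<not> snd u' \<le> k - l"
        moreover have "(l, snd u') \<in> F" using u'F fu by (cases u') simp
        ultimately have "(l, k - l + 1) \<in> F"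
          using fer_col[OF fer _, of l "snd u'" "k - l + 1"] by simp
        then show False using nc by simp
      qed
      then show "u' \<in> (\<lambda>y. (l,y)) ` {2..k-l}" using fu su s1
        by (intro image_eqI[of _ _ "snd u'"]) (simp_all add: prod_eq_iff)
    qed
    have "card {u'\<in>nbr F (l,1). snd u' \<noteq> 1} \<le> card ((\<lambda>y. (l,y)) ` {2..k-l})"
      using up by (rule card_mono[rotated]) simp
    also have "\<dots> \<le> card {2..k-l}" by (rule card_image_le) simp
    finally have c2': "card {u'\<in>nbr F (l,1). snd u' \<noteq> 1} \<le> k - l - 1" by simp
    have "int (card {w\<in>nbr F (l,1). w \<notin> S}) \<le> int (card {u'\<in>nbr F (l,1). snd u' \<noteq> 1})"
      using H[OF l1S] by (simp add: D1_def)
    then show False using c1 c2' lk by linarith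
  next
    case False
    obtain u where u: "u \<in> S" using S(2) by blast
    have su: "snd u = 1" using False u by blast
    have uF: "u \<in> F" using SF[OF u] .
    have "u \<noteq> (k,1)" using u S(1) by blast
    then have vn: "(k,1) \<in> nbr F u" using uF vF su by (auto simp: nbr_iff)
    have sub: "insert (k,1) {u'\<in>nbr F u. snd u' \<noteq> 1} \<subseteq> {w\<in>nbr F u. w \<notin> S}"
      using vn S(1) False by auto
    have "card (insert (k,1) {u'\<in>nbr F u. snd u' \<noteq> 1}) = Suc (card {u'\<in>nbr F u. snd u' \<noteq> 1})"
      using finite_nbr[OF fin] by (subst card_insert_disjoint) auto
    moreover have "card (insert (k,1) {u'\<in>nbr F u. snd u' \<noteq> 1}) \<le> card {w\<in>nbr F u. w \<notin> S}"
      using sub by (rule card_mono[rotated]) (simp add: finite_nbr[OF fin])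
    moreover have "int (card {w\<in>nbr F u. w \<notin> S}) \<le> int (card {u'\<in>nbr F u. snd u' \<noteq> 1})"
      using H[OF u] su by (simp add: D1_def)
    ultimately show False by linarith
  qed
qed

lemma neg_dir:
  assumes nc: "(l, k - l + 1) \<notin> F"
  shows "\<not> positive_rank F (Dxy F (k+1) 1)"
proof
  assume pr: "positive_rank F (Dxy F (k+1) 1)"
  let ?D = "Dxy F (k+1) 1"
  have lk: "l < k"
  proof (rule ccontr)
    assume "\<not> l < k"
    then have "l = k" using l_le_k by simp
    then show False using nc rc1 l_pos by simp
  qed
  have vF: "(k,1) \<in> F" using rc1 lk l_pos by simp
  obtain D' where D': "D' \<in> linsys F ?D" "D' (k,1) > 0" using pr vF unfolding positive_rank_def by blast
  then have eqv: "div_equiv F ?D D'" and eff: "effective F D'" by (auto simp: linsys_def)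
  obtain f where f: "D' = (\<lambda>w. ?D w - lap F f w)" using equiv_lap[OF eqv fin] by blast
  define h where "h = (\<lambda>w. f w + rr w)"
  have Deq: "\<forall>w\<in>F. D' w = D1 w - lap F h w"
  proof
    fix w assume wF: "w \<in> F"
    have "lap F h w = lap F f w + lap F rr w" unfolding h_def by (rule lap_add)
    then show "D' w = D1 w - lap F h w" using D1_rr[OF wF] f by simp
  qed
  have le: "D' (k,1) \<le> D1 (k,1)"
    by (rule burn[OF fin vF Deq]) (use eff burn_cond[OF nc lk] in \<open>auto simp: effective_def\<close>)
  have e: "{u\<in>nbr F (k,1). snd u \<noteq> 1} = {}"
  proof (rule ccontr)
    assume "{u\<in>nbr F (k,1). snd u \<noteq> 1} \<noteq> {}"
    then obtain u where u: "u \<in> nbr F (k,1)" "snd u \<noteq> 1" by blast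
    then have "fst u = k" "u \<in> F" by (auto simp: nbr_iff)
    then show False using hiF u(2) lk by fastforce
  qed
  have "D1 (k,1) = 0" by (simp only: D1_def e card.empty) simp
  then show False using le D'(2) by simp
qed
end

theorem proposition3p2:
  fixes F :: "cell set" and k l :: nat
  assumes "ferrers F"
    and "row F 2 \<noteq> {}"
    and "k = row_length F 1"
    and "l = row_length F 2"
  shows "positive_rank F (Dxy F (k + 1) 1) \<longleftrightarrow> (l, k - l + 1) \<in> F"
proof -
  interpret fsetup F k l using assms by unfold_locales
  show ?thesis using pos_dir neg_dir by blast
qed

end
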